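(* Under the standing assumptions below, for every $\theta\in\mathbb{R}^K$, $$(\theta^*-\theta)^T\bar g(\theta)=(1-\gamma)\|V_{\theta^*}-V_\theta\|_D^2+\gamma\|V_{\theta^*}-V_\theta\|_{\rm Dir}^2 .$$
   Context: Setting: finite state space $\mathcal S=[n]$, a fixed policy inducing an irreducible aperiodic transition matrix $P$ with unique stationary distribution $\pi$, bounded deterministic rewards, $r(s,s')=\sum_a\mu(s,a)r(s,a,s')$ ($\mu$ the policy), discount $\gamma\in(0,1)$. Features $\Phi\in\mathbb{R}^{n\times K}$ of full column rank with rows $\phi(s)^T$, $\|\phi(s)\|_2\le1$, $V_\theta=\Phi\theta$. Norms: $\|V\|_D^2=\sum_s\pi_sV(s)^2$; $\|V\|_{\rm Dir}^2=\frac12\sum_{s,s'}\pi_sP(s,s')(V(s')-V(s))^2$. Mean TD(0) direction $\bar g(\theta)=\sum_{s,s'}\pi_sP(s,s')\big(r(s,s')+\gamma\phi(s')^T\theta-\phi(s)^T\theta\big)\phi(s)$; $\theta^*$ is the unique vector with $\bar g(\theta^* )=0$. *)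

theory Defs
  imports "HOL-Analysis.Analysis"
begin

(* Finite state space 's, transition matrix P (rows indexed by current state). *)

definition stochastic :: "real^'s^'s \<Rightarrow> bool" where
  "stochastic P \<longleftrightarrow> (\<forall>s s'. P $ s $ s' \<ge> 0) \<and> (\<forall>s. (\<Sum>s'\<in>UNIV. P $ s $ s') = 1)"

definition mpow :: "real^'s^'s \<Rightarrow> nat \<Rightarrow> real^'s^'s" where
  "mpow P n = (((**) P) ^^ n) (mat 1)"

definition irreducible_chain :: "real^'s^'s \<Rightarrow> bool" where
  "irreducible_chain P \<longleftrightarrow> (\<forall>s s'. \<exists>n>0. mpow P n $ s $ s' > 0)"

definition aperiodic_chain :: "real^'s^'s \<Rightarrow> bool" where
  "aperiodic_chain P \<longleftrightarrow> (\<forall>s. Gcd {n. n > 0 \<and> mpow P n $ s $ s > 0} = (1::nat))"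

definition stationary_dist :: "real^'s^'s \<Rightarrow> ('s \<Rightarrow> real) \<Rightarrow> bool" where
  "stationary_dist P \<pi> \<longleftrightarrow> (\<forall>s. \<pi> s \<ge> 0) \<and> (\<Sum>s\<in>UNIV. \<pi> s) = 1 \<and>
     (\<forall>s'. (\<Sum>s\<in>UNIV. \<pi> s * P $ s $ s') = \<pi> s')"

definition avg_reward :: "('s \<Rightarrow> 'a::finite \<Rightarrow> real) \<Rightarrow> ('s \<Rightarrow> 'a \<Rightarrow> 's \<Rightarrow> real) \<Rightarrow> 's \<Rightarrow> 's \<Rightarrow> real" where
  "avg_reward \<mu> r s s' = (\<Sum>a\<in>UNIV. \<mu> s a * r s a s')"

definition Vtheta :: "('s \<Rightarrow> real^'k) \<Rightarrow> real^'k \<Rightarrow> 's \<Rightarrow> real" where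
  "Vtheta \<phi> \<theta> s = \<phi> s \<bullet> \<theta>"

definition D_norm_sq :: "('s::finite \<Rightarrow> real) \<Rightarrow> ('s \<Rightarrow> real) \<Rightarrow> real" where
  "D_norm_sq \<pi> V = (\<Sum>s\<in>UNIV. \<pi> s * (V s)\<^sup>2)"

definition Dir_norm_sq :: "('s::finite \<Rightarrow> real) \<Rightarrow> real^'s^'s \<Rightarrow> ('s \<Rightarrow> real) \<Rightarrow> real" where
  "Dir_norm_sq \<pi> P V = (1/2) * (\<Sum>s\<in>UNIV. \<Sum>s'\<in>UNIV. \<pi> s * P $ s $ s' * (V s' - V s)\<^sup>2)"

definition gbar :: "('s::finite \<Rightarrow> real) \<Rightarrow> real^'s^'s \<Rightarrow> ('s \<Rightarrow> 's \<Rightarrow> real) \<Rightarrow> real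
      \<Rightarrow> ('s \<Rightarrow> real^'k) \<Rightarrow> real^'k \<Rightarrow> real^'k" where
  "gbar \<pi> P R \<gamma> \<phi> \<theta> = (\<Sum>s\<in>UNIV. \<Sum>s'\<in>UNIV.
      (\<pi> s * P $ s $ s' * (R s s' + \<gamma> * (\<phi> s' \<bullet> \<theta>) - \<phi> s \<bullet> \<theta>)) *\<^sub>R \<phi> s)"

end

theory Submission
  imports Defs
begin

theorem corollary1:
  fixes P :: "real^'s::finite^'s"
    and \<pi> :: "'s \<Rightarrow> real"
    and \<mu> :: "'s \<Rightarrow> 'a::finite \<Rightarrow> real"
    and r :: "'s \<Rightarrow> 'a \<Rightarrow> 's \<Rightarrow> real"
    and \<gamma> :: real
    and \<phi> :: "'s \<Rightarrow> real^'k::finite"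
    and \<theta>s \<theta> :: "real^'k"
  assumes "stochastic P"
    and "irreducible_chain P"
    and "aperiodic_chain P"
    and "stationary_dist P \<pi>"
    and "\<forall>s a. \<mu> s a \<ge> 0" and "\<forall>s. (\<Sum>a\<in>UNIV. \<mu> s a) = 1"
    and "\<exists>B. \<forall>s a s'. \<bar>r s a s'\<bar> \<le> B"
    and "0 < \<gamma>" and "\<gamma> < 1"
    and "\<forall>s. norm (\<phi> s) \<le> 1"
    and "\<forall>\<theta>'. (\<forall>s. \<phi> s \<bullet> \<theta>' = 0) \<longrightarrow> \<theta>' = 0"
    and "gbar \<pi> P (avg_reward \<mu> r) \<gamma> \<phi> \<theta>s = 0"
    and "\<forall>\<theta>'. gbar \<pi> P (avg_reward \<mu> r) \<gamma> \<phi> \<theta>' = 0 \<longrightarrow> \<theta>' = \<theta>s"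
  shows "(\<theta>s - \<theta>) \<bullet> gbar \<pi> P (avg_reward \<mu> r) \<gamma> \<phi> \<theta>
    = (1 - \<gamma>) * D_norm_sq \<pi> (\<lambda>s. Vtheta \<phi> \<theta>s s - Vtheta \<phi> \<theta> s)
      + \<gamma> * Dir_norm_sq \<pi> P (\<lambda>s. Vtheta \<phi> \<theta>s s - Vtheta \<phi> \<theta> s)"
proof -
  let ?G = "gbar \<pi> P (avg_reward \<mu> r) \<gamma> \<phi>"
  let ?R = "avg_reward \<mu> r"
  define u where "u s = \<phi> s \<bullet> (\<theta>s - \<theta>)" for s
  define w where "w s s' = \<pi> s * P $ s $ s'" for s s'
  have inner: "(\<theta>s - \<theta>) \<bullet> ?G t = (\<Sum>s\<in>UNIV. \<Sum>s'\<in>UNIV. w s s' * (?R s s' + \<gamma> * (\<phi> s' \<bullet> t) - \<phi> s \<bullet> t) * u s)" for t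
    unfolding gbar_def u_def w_def
    by (simp add: inner_sum_right inner_commute)
  have z: "(\<theta>s - \<theta>) \<bullet> ?G \<theta>s = 0" using assms(12) by simp
  have "(\<theta>s - \<theta>) \<bullet> ?G \<theta> = (\<theta>s - \<theta>) \<bullet> ?G \<theta> - (\<theta>s - \<theta>) \<bullet> ?G \<theta>s" using z by simp
  also have "\<dots> = (\<Sum>s\<in>UNIV. \<Sum>s'\<in>UNIV. w s s' * (u s - \<gamma> * u s') * u s)"
    unfolding inner sum_subtractf[symmetric] u_def
    by (intro sum.cong refl) (simp add: inner_diff_right algebra_simps)
  also have "\<dots> = (\<Sum>s\<in>UNIV. \<Sum>s'\<in>UNIV. w s s' * (u s)\<^sup>2) - \<gamma> * (\<Sum>s\<in>UNIV. \<Sum>s'\<in>UNIV. w s s' * u s * u s')"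
    by (simp add: sum_subtractf sum_distrib_left algebra_simps power2_eq_square)
  finally have L: "(\<theta>s - \<theta>) \<bullet> ?G \<theta> = (\<Sum>s\<in>UNIV. \<Sum>s'\<in>UNIV. w s s' * (u s)\<^sup>2) - \<gamma> * (\<Sum>s\<in>UNIV. \<Sum>s'\<in>UNIV. w s s' * u s * u s')" .
  have st: "\<And>s. (\<Sum>s'\<in>UNIV. P $ s $ s') = 1" using assms(1) unfolding stochastic_def by blast
  have sd: "\<And>s'. (\<Sum>s\<in>UNIV. \<pi> s * P $ s $ s') = \<pi> s'" using assms(4) unfolding stationary_dist_def by blast
  have A: "(\<Sum>s\<in>UNIV. \<Sum>s'\<in>UNIV. w s s' * (u s)\<^sup>2) = (\<Sum>s\<in>UNIV. \<pi> s * (u s)\<^sup>2)"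
  proof (intro sum.cong refl)
    fix s
    have "(\<Sum>s'\<in>UNIV. w s s' * (u s)\<^sup>2) = \<pi> s * (u s)\<^sup>2 * (\<Sum>s'\<in>UNIV. P $ s $ s')"
      unfolding w_def by (simp add: sum_distrib_left sum_distrib_right algebra_simps)
    then show "(\<Sum>s'\<in>UNIV. w s s' * (u s)\<^sup>2) = \<pi> s * (u s)\<^sup>2" using st by simp
  qed
  have B: "(\<Sum>s\<in>UNIV. \<Sum>s'\<in>UNIV. w s s' * (u s')\<^sup>2) = (\<Sum>s\<in>UNIV. \<pi> s * (u s)\<^sup>2)"
  proof -
    have "(\<Sum>s\<in>UNIV. \<Sum>s'\<in>UNIV. w s s' * (u s')\<^sup>2) = (\<Sum>s'\<in>UNIV. \<Sum>s\<in>UNIV. w s s' * (u s')\<^sup>2)"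
      by (rule sum.swap)
    also have "\<dots> = (\<Sum>s'\<in>UNIV. \<pi> s' * (u s')\<^sup>2)"
    proof (intro sum.cong refl)
      fix s'
      have "(\<Sum>s\<in>UNIV. w s s' * (u s')\<^sup>2) = (u s')\<^sup>2 * (\<Sum>s\<in>UNIV. \<pi> s * P $ s $ s')"
        unfolding w_def by (simp add: sum_distrib_left sum_distrib_right algebra_simps)
      then show "(\<Sum>s\<in>UNIV. w s s' * (u s')\<^sup>2) = \<pi> s' * (u s')\<^sup>2" using sd by simp
    qed
    finally show ?thesis .
  qed
  have C: "Dir_norm_sq \<pi> P u = (1/2) * ((\<Sum>s\<in>UNIV. \<Sum>s'\<in>UNIV. w s s' * (u s')\<^sup>2) + (\<Sum>s\<in>UNIV. \<Sum>s'\<in>UNIV. w s s' * (u s)\<^sup>2)) - (\<Sum>s\<in>UNIV. \<Sum>s'\<in>UNIV. w s s' * u s * u s')"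
    unfolding Dir_norm_sq_def w_def
    by (simp add: sum.distrib[symmetric] sum_subtractf[symmetric] sum_distrib_left power2_eq_square algebra_simps)
  have U: "(\<lambda>s. Vtheta \<phi> \<theta>s s - Vtheta \<phi> \<theta> s) = u"
    by (rule ext) (simp add: Vtheta_def u_def inner_diff_right)
  show ?thesis unfolding U L D_norm_sq_def C A B by (simp add: algebra_simps)
qed

end
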